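(* If a sequent $\Gamma\Rightarrow\Delta$ is provable in $\mathsf{Grz}_\infty$, then $\Gamma\Rightarrow\Delta$ has a slim $\infty$-proof in $\mathsf{Grz}_\infty$.
   Context: Formulas are built from $\bot$ and atomic propositions using $\to$ and $\Box$. A sequent is $\Gamma\Rightarrow\Delta$ with $\Gamma,\Delta$ finite multisets of formulas; $\Box\Pi$ denotes the multiset $\{\Box B:B\in\Pi\}$. The calculus $\mathsf{Grz}_\infty$ has initial sequents $\Gamma,p\Rightarrow p,\Delta$ ($p$ atomic) and $\Gamma,\bot\Rightarrow\Delta$, and rules: $(\to_L)$ from $\Gamma,B\Rightarrow\Delta$ and $\Gamma\Rightarrow A,\Delta$ infer $\Gamma,A\to B\Rightarrow\Delta$; $(\to_R)$ from $\Gamma,A\Rightarrow B,\Delta$ infer $\Gamma\Rightarrow A\to B,\Delta$; $(\mathsf{refl})$ from $\Gamma,B,\Box B\Rightarrow\Delta$ infer $\Gamma,\Box B\Rightarrow\Delta$; $(\Box)$ from left premise $\Gamma,\Box\Pi\Rightarrow A,\Delta$ and right premise $\Box\Pi\Rightarrow A$ infer $\Gamma,\Box\Pi\Rightarrow\Box A,\Delta$. An $\infty$-proof is a possibly infinite tree of sequents built by these rules, with leaves labelled by initial sequents, in which every infinite branch passes through a right premise of $(\Box)$ infinitely often; a sequent is provable if it labels the root of an $\infty$-proof. An application of $(\Box)$ is slim if the multiset $\Pi$ in it is a set (contains no formula more than once); an $\infty$-proof is slim if every application of $(\Box)$ in it is slim. *)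

theory Defs
  imports Main "HOL-Library.Multiset"
begin

datatype 'a fm = Bot | At 'a | Imp "'a fm" "'a fm" | Box "'a fm"

type_synonym 'a sequent = "'a fm multiset \<times> 'a fm multiset"

datatype 'a rule = InitAt | InitBot | ImpL | ImpR | Refl | BoxRule "'a fm multiset"

inductive rstep :: "'a rule \<Rightarrow> 'a sequent \<Rightarrow> 'a sequent list \<Rightarrow> bool" where
  init_at: "rstep InitAt (add_mset (At p) \<Gamma>, add_mset (At p) \<Delta>) []"
| init_bot: "rstep InitBot (add_mset Bot \<Gamma>, \<Delta>) []"
| imp_l: "rstep ImpL (add_mset (Imp A B) \<Gamma>, \<Delta>) [(add_mset B \<Gamma>, \<Delta>), (\<Gamma>, add_mset A \<Delta>)]"
| imp_r: "rstep ImpR (\<Gamma>, add_mset (Imp A B) \<Delta>) [(add_mset A \<Gamma>, add_mset B \<Delta>)]"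
| refl: "rstep Refl (add_mset (Box B) \<Gamma>, \<Delta>) [(add_mset B (add_mset (Box B) \<Gamma>), \<Delta>)]"
| box: "rstep (BoxRule \<Pi>) (\<Gamma> + image_mset Box \<Pi>, add_mset (Box A) \<Delta>)
          [(\<Gamma> + image_mset Box \<Pi>, add_mset A \<Delta>), (image_mset Box \<Pi>, {#A#})]"

codatatype 'a ptree = PNode (seq: "'a sequent") (rl: "'a rule") (subs: "'a ptree list")

fun subtree :: "'a ptree \<Rightarrow> nat list \<Rightarrow> 'a ptree" where
  "subtree t [] = t"
| "subtree t (i # is) = subtree (subs t ! i) is"

inductive_set nodes :: "'a ptree \<Rightarrow> 'a ptree set" for t where
  root: "t \<in> nodes t"
| child: "s \<in> nodes t \<Longrightarrow> u \<in> set (subs s) \<Longrightarrow> u \<in> nodes t"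

definition inf_branch :: "'a ptree \<Rightarrow> (nat \<Rightarrow> nat) \<Rightarrow> bool" where
  "inf_branch t f \<longleftrightarrow> (\<forall>n. f n < length (subs (subtree t (map f [0..<n]))))"

text \<open>The branch passes through a right premise of the box rule at step n:
  node n is a box-rule application and node n+1 is its right premise.\<close>
definition right_box_step :: "'a ptree \<Rightarrow> (nat \<Rightarrow> nat) \<Rightarrow> nat \<Rightarrow> bool" where
  "right_box_step t f n \<longleftrightarrow>
     (\<exists>\<Pi>. rl (subtree t (map f [0..<n])) = BoxRule \<Pi>) \<and> f n = 1"

definition inf_proof :: "'a ptree \<Rightarrow> bool" where
  "inf_proof t \<longleftrightarrow>
     (\<forall>s \<in> nodes t. rstep (rl s) (seq s) (map seq (subs s))) \<and>
     (\<forall>f. inf_branch t f \<longrightarrow> (\<exists>\<^sub>\<infinity>n. right_box_step t f n))"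

definition provable :: "'a sequent \<Rightarrow> bool" where
  "provable S \<longleftrightarrow> (\<exists>t. inf_proof t \<and> seq t = S)"

definition slim :: "'a ptree \<Rightarrow> bool" where
  "slim t \<longleftrightarrow> (\<forall>s \<in> nodes t. \<forall>\<Pi>. rl s = BoxRule \<Pi> \<longrightarrow> (\<forall>B. count \<Pi> B \<le> 1))"

end

theory Submission
  imports Defs
begin


fun is_box :: "'a fm \<Rightarrow> bool" where
  "is_box (Box _) = True" | "is_box _ = False"

definition lsim :: "'a fm multiset \<Rightarrow> 'a fm multiset \<Rightarrow> bool" where
  "lsim G G' \<longleftrightarrow> (\<forall>F. count G F \<le> count G' F \<or> (is_box F \<and> F \<in># G'))"

definition sim :: "'a sequent \<Rightarrow> 'a sequent \<Rightarrow> bool" where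
  "sim S S' \<longleftrightarrow> lsim (fst S) (fst S') \<and> snd S \<subseteq># snd S'"

definition isboxr :: "'a rule \<Rightarrow> bool" where
  "isboxr r \<longleftrightarrow> (\<exists>P. r = BoxRule P)"

definition goodr :: "'a rule \<Rightarrow> bool" where
  "goodr r \<longleftrightarrow> (\<forall>P. r = BoxRule P \<longrightarrow> (\<forall>B. count P B \<le> 1))"

lemma lsim_refl: "lsim G G" by (simp add: lsim_def)

lemma sim_refl: "sim S S" by (simp add: sim_def lsim_refl)

lemma lsim_add: "lsim G G' \<Longrightarrow> lsim (add_mset X G) (add_mset X G')"
  unfolding lsim_def
proof (intro allI)
  fix F assume a: "\<forall>F. count G F \<le> count G' F \<or> is_box F \<and> F \<in># G'"
  then have aF: "count G F \<le> count G' F \<or> is_box F \<and> F \<in># G'" by blast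
  show "count (add_mset X G) F \<le> count (add_mset X G') F \<or> is_box F \<and> F \<in># add_mset X G'"
  proof (cases "F = X")
    case True then show ?thesis using aF by auto
  next
    case False
    then have "count (add_mset X G) F = count G F" "count (add_mset X G') F = count G' F" by simp_all
    moreover have "F \<in># G' \<Longrightarrow> F \<in># add_mset X G'" by simp
    ultimately show ?thesis using aF by argo
  qed
qed

lemma lsim_mem: "lsim (add_mset X G) G' \<Longrightarrow> X \<in># G'"
proof -
  assume a: "lsim (add_mset X G) G'"
  have "count (add_mset X G) X \<le> count G' X \<or> is_box X \<and> X \<in># G'"
    using a unfolding lsim_def by blast
  moreover have "count (add_mset X G) X > 0" by simp
  ultimately show "X \<in># G'" by (metis count_greater_zero_iff order_less_le_trans)
qed

lemma lsim_nonbox: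
  assumes a: "lsim (add_mset X G) G'" and nb: "\<not> is_box X"
  shows "lsim G (G' - {#X#})"
  unfolding lsim_def
proof
  fix F
  have aF: "count (add_mset X G) F \<le> count G' F \<or> is_box F \<and> F \<in># G'"
    using a unfolding lsim_def by blast
  show "count G F \<le> count (G' - {#X#}) F \<or> is_box F \<and> F \<in># G' - {#X#}"
  proof (cases "F = X")
    case True
    then have "\<not> is_box F" using nb by simp
    then have "count (add_mset X G) F \<le> count G' F" using aF by blast
    then have "count G F + 1 \<le> count G' F" using True by simp
    moreover have "count (G' - {#X#}) F = count G' F - 1" using True by simp
    ultimately show ?thesis by linarith
  next
    case False
    then have e: "count (G' - {#X#}) F = count G' F" by simp
    have e2: "count (add_mset X G) F = count G F" using False by simp
    have "F \<in># G' - {#X#} \<longleftrightarrow> F \<in># G'" using e by (metis count_greater_zero_iff)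
    then show ?thesis using aF e e2 by argo
  qed
qed

lemma cnt_box: "count (image_mset Box M) (Box C) = count M C"
  by (induction M) auto

lemma key:
  assumes "rstep r S ps" "sim S S'"
  shows "\<exists>r' ps'. rstep r' S' ps' \<and> goodr r' \<and> list_all2 sim ps ps' \<and> (isboxr r \<longleftrightarrow> isboxr r')"
  using assms
proof (induction rule: rstep.induct)
  case (init_at p \<Gamma> \<Delta>)
  obtain G D where S': "S' = (G, D)" by fastforce
  have "At p \<in># G" using init_at S' lsim_mem by (auto simp: sim_def)
  moreover have "At p \<in># D" using init_at S' by (auto simp: sim_def dest: mset_subset_eqD)
  ultimately have "rstep InitAt S' []" unfolding S'
    by (metis rstep.init_at insert_DiffM)
  then show ?case by (auto simp: goodr_def isboxr_def)
next
  case (init_bot \<Gamma> \<Delta>)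
  obtain G D where S': "S' = (G, D)" by fastforce
  have "Bot \<in># G" using init_bot S' lsim_mem by (auto simp: sim_def)
  then have "rstep InitBot S' []" unfolding S'
    by (metis rstep.init_bot insert_DiffM)
  then show ?case by (auto simp: goodr_def isboxr_def)
next
  case (imp_l A B \<Gamma> \<Delta>)
  obtain G D where S': "S' = (G, D)" by fastforce
  have l: "lsim (add_mset (Imp A B) \<Gamma>) G" and d: "\<Delta> \<subseteq># D" using imp_l S' by (auto simp: sim_def)
  have m: "Imp A B \<in># G" using l lsim_mem by blast
  define G1 where "G1 = G - {#Imp A B#}"
  have G: "G = add_mset (Imp A B) G1" using m G1_def by simp
  have l1: "lsim \<Gamma> G1" using lsim_nonbox[OF l] G1_def by simp
  have "rstep ImpL S' [(add_mset B G1, D), (G1, add_mset A D)]"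
    unfolding S' G by (rule rstep.imp_l)
  moreover have "list_all2 sim [(add_mset B \<Gamma>, \<Delta>), (\<Gamma>, add_mset A \<Delta>)] [(add_mset B G1, D), (G1, add_mset A D)]"
    using l1 d by (simp add: sim_def lsim_add)
  ultimately show ?case by (force simp: goodr_def isboxr_def)
next
  case (imp_r \<Gamma> A B \<Delta>)
  obtain G D where S': "S' = (G, D)" by fastforce
  have l: "lsim \<Gamma> G" and d: "add_mset (Imp A B) \<Delta> \<subseteq># D" using imp_r S' by (auto simp: sim_def)
  define D1 where "D1 = D - {#Imp A B#}"
  have D: "D = add_mset (Imp A B) D1" using d D1_def
    by (metis insert_DiffM insert_subset_eq_iff)
  have d1: "\<Delta> \<subseteq># D1" using d D by simp
  have "rstep ImpR S' [(add_mset A G, add_mset B D1)]"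
    unfolding S' D by (rule rstep.imp_r)
  moreover have "list_all2 sim [(add_mset A \<Gamma>, add_mset B \<Delta>)] [(add_mset A G, add_mset B D1)]"
    using l d1 by (simp add: sim_def lsim_add)
  ultimately show ?case by (force simp: goodr_def isboxr_def)
next
  case (refl B \<Gamma> \<Delta>)
  obtain G D where S': "S' = (G, D)" by fastforce
  have l: "lsim (add_mset (Box B) \<Gamma>) G" and d: "\<Delta> \<subseteq># D" using refl S' by (auto simp: sim_def)
  have m: "Box B \<in># G" using l lsim_mem by blast
  define G1 where "G1 = G - {#Box B#}"
  have G: "G = add_mset (Box B) G1" using m G1_def by simp
  have "rstep Refl S' [(add_mset B (add_mset (Box B) G1), D)]"
    unfolding S' G by (rule rstep.refl)
  moreover have "list_all2 sim [(add_mset B (add_mset (Box B) \<Gamma>), \<Delta>)] [(add_mset B (add_mset (Box B) G1), D)]"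
    using l d G by (simp add: sim_def lsim_add)
  ultimately show ?case by (force simp: goodr_def isboxr_def)
next
  case (box \<Pi> \<Gamma> A \<Delta>)
  obtain G D where S': "S' = (G, D)" by fastforce
  have l: "lsim (\<Gamma> + image_mset Box \<Pi>) G" and d: "add_mset (Box A) \<Delta> \<subseteq># D" using box S' by (auto simp: sim_def)
  define D1 where "D1 = D - {#Box A#}"
  have D: "D = add_mset (Box A) D1" using d D1_def
    by (metis insert_DiffM insert_subset_eq_iff)
  have d1: "\<Delta> \<subseteq># D1" using d D by simp
  define P where "P = mset_set (set_mset \<Pi>)"
  have cP: "count P C = (if C \<in># \<Pi> then 1 else 0)" for C
    unfolding P_def by auto
  have cBP: "count (image_mset Box P) F = (if \<exists>C. F = Box C \<and> C \<in># \<Pi> then 1 else 0)" for F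
  proof (cases "\<exists>C. F = Box C")
    case True
    then obtain C where F: "F = Box C" by blast
    have "count (image_mset Box P) (Box C) = count P C"
      by (rule cnt_box)
    then show ?thesis using F cP by auto
  next
    case False
    then have "F \<notin># image_mset Box P" by auto
    then have "count (image_mset Box P) F = 0" by (meson count_eq_zero_iff)
    then show ?thesis using False by auto
  qed
  have sub: "image_mset Box P \<subseteq># G"
  proof (rule mset_subset_eqI)
    fix F show "count (image_mset Box P) F \<le> count G F"
    proof (cases "\<exists>C. F = Box C \<and> C \<in># \<Pi>")
      case True
      then obtain C where F: "F = Box C" and C: "C \<in># \<Pi>" by blast
      have "F \<in># \<Gamma> + image_mset Box \<Pi>" using F C by simp
      then have "0 < count (\<Gamma> + image_mset Box \<Pi>) F" by (meson count_greater_zero_iff)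
      then have "F \<in># G" using l[unfolded lsim_def, rule_format, of F]
        by (metis count_greater_zero_iff order_less_le_trans)
      then show ?thesis using cBP[of F] True by simp
    next
      case False
      then have "count (image_mset Box P) F = 0" using cBP[of F] by (simp only: if_False)
      then show ?thesis by simp
    qed
  qed
  define G1 where "G1 = G - image_mset Box P"
  have G: "G = G1 + image_mset Box P" using sub G1_def by simp
  have "rstep (BoxRule P) S' [(G1 + image_mset Box P, add_mset A D1), (image_mset Box P, {#A#})]"
    unfolding S' G D by (rule rstep.box)
  moreover have "lsim (image_mset Box \<Pi>) (image_mset Box P)"
    unfolding lsim_def
  proof
    fix F show "count (image_mset Box \<Pi>) F \<le> count (image_mset Box P) F \<or> is_box F \<and> F \<in># image_mset Box P"
    proof (cases "\<exists>C. F = Box C \<and> C \<in># \<Pi>")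
      case True
      then obtain C where F: "F = Box C" by blast
      have "count (image_mset Box P) F = 1" using cBP[of F] True by (simp only: if_True)
      then have "F \<in># image_mset Box P" by (metis count_greater_zero_iff zero_less_one)
      then show ?thesis using F by simp
    next
      case False
      then have "F \<notin># image_mset Box \<Pi>" by auto
      then have "count (image_mset Box \<Pi>) F = 0" by (meson count_eq_zero_iff)
      then show ?thesis by simp
    qed
  qed
  moreover have "list_all2 sim [(\<Gamma> + image_mset Box \<Pi>, add_mset A \<Delta>), (image_mset Box \<Pi>, {#A#})]
     [(G1 + image_mset Box P, add_mset A D1), (image_mset Box P, {#A#})]"
    using l d1 G calculation(2) by (simp add: sim_def)
  moreover have "goodr (BoxRule P)" using cP by (simp add: goodr_def)
  ultimately show ?case by (force simp: isboxr_def)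
qed



definition stp :: "'a ptree \<Rightarrow> 'a sequent \<Rightarrow> 'a rule \<times> 'a sequent list" where
  "stp t S = (SOME p. rstep (fst p) S (snd p) \<and> goodr (fst p) \<and> list_all2 sim (map seq (subs t)) (snd p)
      \<and> (isboxr (rl t) \<longleftrightarrow> isboxr (fst p)))"

primcorec tr :: "'a ptree \<Rightarrow> 'a sequent \<Rightarrow> 'a ptree" where
  "tr t S = PNode S (fst (stp t S)) (map (\<lambda>p. tr (fst p) (snd p)) (zip (subs t) (snd (stp t S))))"

definition vnode :: "'a ptree \<Rightarrow> bool" where
  "vnode s \<longleftrightarrow> rstep (rl s) (seq s) (map seq (subs s))"

lemma stp_ok:
  assumes "vnode t" "sim (seq t) S"
  shows "rstep (fst (stp t S)) S (snd (stp t S)) \<and> goodr (fst (stp t S))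
     \<and> list_all2 sim (map seq (subs t)) (snd (stp t S)) \<and> (isboxr (rl t) \<longleftrightarrow> isboxr (fst (stp t S)))"
proof -
  obtain r' ps' where "rstep r' S ps' \<and> goodr r' \<and> list_all2 sim (map seq (subs t)) ps' \<and> (isboxr (rl t) \<longleftrightarrow> isboxr r')"
    using key[OF assms(1)[unfolded vnode_def] assms(2)] by blast
  then have "\<exists>p. rstep (fst p) S (snd p) \<and> goodr (fst p) \<and> list_all2 sim (map seq (subs t)) (snd p)
      \<and> (isboxr (rl t) \<longleftrightarrow> isboxr (fst p))" by (intro exI[of _ "(r', ps')"]) simp
  from someI_ex[OF this] show ?thesis unfolding stp_def .
qed

lemma nodes_trans0: "u \<in> nodes s \<Longrightarrow> s \<in> nodes t \<Longrightarrow> u \<in> nodes t"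
  by (induction u rule: nodes.induct) (auto intro: nodes.child)

lemma nodes_trans: "s \<in> nodes t \<Longrightarrow> u \<in> nodes s \<Longrightarrow> u \<in> nodes t"
  using nodes_trans0 by blast

lemma tr_child:
  assumes "vnode t" "sim (seq t) S" "i < length (subs t)"
  shows "i < length (subs (tr t S)) \<and> subs (tr t S) ! i = tr (subs t ! i) (snd (stp t S) ! i)
     \<and> sim (seq (subs t ! i)) (snd (stp t S) ! i)"
proof -
  have la: "list_all2 sim (map seq (subs t)) (snd (stp t S))" using stp_ok[OF assms(1,2)] by blast
  then have len: "length (snd (stp t S)) = length (subs t)" by (metis length_map list_all2_lengthD)
  show ?thesis using assms(3) len list_all2_nthD[OF la, of i] by simp
qed

lemma len_tr:
  assumes "vnode t" "sim (seq t) S"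
  shows "length (subs (tr t S)) = length (subs t)"
proof -
  have la: "list_all2 sim (map seq (subs t)) (snd (stp t S))" using stp_ok[OF assms(1,2)] by blast
  then have len: "length (snd (stp t S)) = length (subs t)" by (metis length_map list_all2_lengthD)
  then show ?thesis by simp
qed

lemma nodes_tr:
  assumes "s \<in> nodes (tr t S)" "\<forall>u\<in>nodes t. vnode u" "sim (seq t) S"
  shows "\<exists>t0 S0. t0 \<in> nodes t \<and> sim (seq t0) S0 \<and> s = tr t0 S0"
  using assms(1)
proof (induction s rule: nodes.induct)
  case root then show ?case using assms(3) nodes.root by blast
next
  case (child s u)
  then obtain t0 S0 where t0: "t0 \<in> nodes t" "sim (seq t0) S0" "s = tr t0 S0" by blast
  have v: "vnode t0" using assms(2) t0(1) by blast
  from child(2) t0(3) obtain i where i: "i < length (subs (tr t0 S0))" "u = subs (tr t0 S0) ! i"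
    by (metis in_set_conv_nth)
  have i': "i < length (subs t0)" using i(1) len_tr[OF v t0(2)] by simp
  note c = tr_child[OF v t0(2) i']
  have "subs t0 ! i \<in> nodes t" using t0(1) i' by (meson nodes.child nth_mem)
  then show ?case using c i(2) by blast
qed

fun vp :: "'a ptree \<Rightarrow> nat list \<Rightarrow> bool" where
  "vp t [] = True"
| "vp t (i # is) = (i < length (subs t) \<and> vp (subs t ! i) is)"

lemma vp_snoc: "vp t (xs @ [x]) \<longleftrightarrow> vp t xs \<and> x < length (subs (subtree t xs))"
  by (induction xs arbitrary: t) auto

lemma subtree_nodes: "vp t is \<Longrightarrow> subtree t is \<in> nodes t"
proof (induction "is" arbitrary: t)
  case Nil then show ?case by (simp add: nodes.root)
next
  case (Cons i "is")
  then have "subtree (subs t ! i) is \<in> nodes (subs t ! i)" by simp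
  moreover have "subs t ! i \<in> nodes t" using Cons.prems by (auto intro: nodes.child nodes.root)
  ultimately show ?case by (auto intro: nodes_trans)
qed

lemma subtree_tr:
  assumes "vp t is" "\<forall>u\<in>nodes t. vnode u" "sim (seq t) S"
  shows "\<exists>S'. subtree (tr t S) is = tr (subtree t is) S' \<and> sim (seq (subtree t is)) S'"
  using assms
proof (induction "is" arbitrary: t S)
  case Nil then show ?case by (intro exI[of _ S]) simp
next
  case (Cons i "is")
  have v: "vnode t" using Cons.prems(2) nodes.root by blast
  have i: "i < length (subs t)" using Cons.prems(1) by simp
  note c = tr_child[OF v Cons.prems(3) i]
  have "subs t ! i \<in> nodes t" using i by (auto intro: nodes.child nodes.root)
  then have "\<forall>u\<in>nodes (subs t ! i). vnode u" using Cons.prems(2) nodes_trans by blast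
  then obtain S' where "subtree (tr (subs t ! i) (snd (stp t S) ! i)) is = tr (subtree (subs t ! i) is) S'
     \<and> sim (seq (subtree (subs t ! i) is)) S'"
    using Cons.IH[of "subs t ! i" "snd (stp t S) ! i"] Cons.prems(1) c by auto
  then show ?case using c by (intro exI[of _ S']) simp
qed

lemma main:
  assumes "inf_proof t"
  shows "inf_proof (tr t (seq t)) \<and> slim (tr t (seq t)) \<and> seq (tr t (seq t)) = seq t"
proof -
  have V: "\<forall>u\<in>nodes t. vnode u" using assms by (simp add: inf_proof_def vnode_def)
  have s0: "sim (seq t) (seq t)" by (rule sim_refl)
  let ?T = "tr t (seq t)"
  have A: "rstep (rl s) (seq s) (map seq (subs s)) \<and> goodr (rl s)" if sn: "s \<in> nodes ?T" for s
  proof -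
    obtain t0 S0 where t0: "t0 \<in> nodes t" "sim (seq t0) S0" "s = tr t0 S0"
      using nodes_tr[OF sn V s0] by blast
    have v: "vnode t0" using V t0(1) by blast
    note ok = stp_ok[OF v t0(2)]
    have la: "list_all2 sim (map seq (subs t0)) (snd (stp t0 S0))" using ok by blast
    then have len: "length (snd (stp t0 S0)) = length (subs t0)" by (metis length_map list_all2_lengthD)
    have "map seq (subs s) = snd (stp t0 S0)" using len t0(3)
      by (simp add: comp_def map_snd_zip)
    then show ?thesis using ok t0(3) by simp
  qed
  have B: "\<exists>\<^sub>\<infinity>n. right_box_step ?T f n" if f: "inf_branch ?T f" for f
  proof -
    have vpn: "vp t (map f [0..<n])" for n
    proof (induction n)
      case 0 then show ?case by simp
    next
      case (Suc n)
      obtain S' where S': "subtree ?T (map f [0..<n]) = tr (subtree t (map f [0..<n])) S'"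
        "sim (seq (subtree t (map f [0..<n]))) S'"
        using subtree_tr[OF Suc V s0] by blast
      have "subtree t (map f [0..<n]) \<in> nodes t" using subtree_nodes[OF Suc] .
      then have v: "vnode (subtree t (map f [0..<n]))" using V by blast
      have "f n < length (subs (subtree ?T (map f [0..<n])))" using f by (simp add: inf_branch_def)
      then have "f n < length (subs (subtree t (map f [0..<n])))" using S' len_tr[OF v S'(2)] by simp
      then show ?case using Suc vp_snoc[of t "map f [0..<n]" "f n"] by simp
    qed
    have rb: "isboxr (rl (subtree ?T (map f [0..<n]))) \<longleftrightarrow> isboxr (rl (subtree t (map f [0..<n])))" for n
    proof -
      obtain S' where S': "subtree ?T (map f [0..<n]) = tr (subtree t (map f [0..<n])) S'"
        "sim (seq (subtree t (map f [0..<n]))) S'"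
        using subtree_tr[OF vpn V s0] by blast
      have "subtree t (map f [0..<n]) \<in> nodes t" using subtree_nodes[OF vpn] .
      then have v: "vnode (subtree t (map f [0..<n]))" using V by blast
      show ?thesis using stp_ok[OF v S'(2)] S'(1) by simp
    qed
    have "inf_branch t f" unfolding inf_branch_def
    proof
      fix n have "vp t (map f [0..<Suc n])" by (rule vpn)
      then show "f n < length (subs (subtree t (map f [0..<n])))" using vp_snoc[of t "map f [0..<n]" "f n"] by simp
    qed
    then have "\<exists>\<^sub>\<infinity>n. right_box_step t f n" using assms by (simp add: inf_proof_def)
    then show ?thesis
      by (rule frequently_elim1) (use rb in \<open>auto simp: right_box_step_def isboxr_def\<close>)
  qed
  show ?thesis using A B
    by (auto simp: inf_proof_def slim_def goodr_def)
qed

theorem lemma8p4: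
  fixes \<Gamma> \<Delta> :: "'a fm multiset"
  assumes "provable (\<Gamma>, \<Delta>)"
  shows "\<exists>t. inf_proof t \<and> slim t \<and> seq t = (\<Gamma>, \<Delta>)"
proof -
  obtain t where "inf_proof t" "seq t = (\<Gamma>, \<Delta>)" using assms by (auto simp: provable_def)
  then show ?thesis using main by metis
qed

end
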